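(* Let $0<\alpha<\infty$ and define $\chi_\alpha(s)=\mu(Fix(s))^\alpha$ for $s\in S(2^\infty)$. If $\chi_\alpha$ is a character on $S(2^\infty)$, then $\alpha\in\mathbb{N}$.
   Context: Let $X=\{0,1\}^{\mathbb{N}}$ with product measure $\mu=\nu^{\otimes\infty}$, $\nu(\{0\})=\nu(\{1\})=1/2$; $X_n=\{0,1\}^n$; $S(2^n)$ the group of all bijections of $X_n$, acting on $X$ by $s((x,a))=(s(x),a)$ for $x\in X_n$, $a\in X$; $S(2^\infty)=\bigcup_n S(2^n)$; $Fix(s)=\{x\in X:s(x)=x\}$. A character on a group $G$ is a function $\chi:G\to\mathbb{C}$ with $\chi(g_1g_2)=\chi(g_2g_1)$ for all $g_1,g_2$, $(\chi(g_ig_j^{-1}))_{i,j=1}^n$ positive semidefinite for all $n$ and $g_1,\dots,g_n$, and $\chi(e)=1$. *)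

theory Defs
  imports "HOL-Probability.Probability"
begin

text \<open>Points of X = {0,1}^N are functions nat => bool (True = 1).\<close>
type_synonym cantor = "nat \<Rightarrow> bool"

definition mu :: "cantor measure" where
  "mu = PiM UNIV (\<lambda>_::nat. measure_pmf (pmf_of_set (UNIV :: bool set)))"

text \<open>X_n = {0,1}^n, represented as sequences vanishing from index n on.\<close>
definition Xn :: "nat \<Rightarrow> cantor set" where
  "Xn n = {x. \<forall>i\<ge>n. \<not> x i}"

definition trunc :: "nat \<Rightarrow> cantor \<Rightarrow> cantor" where
  "trunc n x = (\<lambda>i. if i < n then x i else False)"

text \<open>Action of a bijection s of X_n on X: s((x,a)) = (s(x),a).\<close>
definition act :: "nat \<Rightarrow> (cantor \<Rightarrow> cantor) \<Rightarrow> cantor \<Rightarrow> cantor" where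
  "act n s y = (\<lambda>i. if i < n then s (trunc n y) i else y i)"

definition S2n :: "nat \<Rightarrow> (cantor \<Rightarrow> cantor) set" where
  "S2n n = {act n s | s. bij_betw s (Xn n) (Xn n)}"

definition S2inf :: "(cantor \<Rightarrow> cantor) set" where
  "S2inf = (\<Union>n. S2n n)"

definition Fix :: "('a \<Rightarrow> 'a) \<Rightarrow> 'a set" where
  "Fix s = {x. s x = x}"

definition is_character :: "('a \<Rightarrow> 'a) set \<Rightarrow> (('a \<Rightarrow> 'a) \<Rightarrow> complex) \<Rightarrow> bool" where
  "is_character G chi \<longleftrightarrow>
     (\<forall>g1\<in>G. \<forall>g2\<in>G. chi (g1 \<circ> g2) = chi (g2 \<circ> g1)) \<and>
     (\<forall>n::nat. \<forall>g::nat \<Rightarrow> ('a \<Rightarrow> 'a). (\<forall>i<n. g i \<in> G) \<longrightarrow>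
        (\<forall>c::nat \<Rightarrow> complex.
           let q = (\<Sum>i<n. \<Sum>j<n. cnj (c i) * c j * chi (g i \<circ> inv (g j)))
           in Im q = 0 \<and> Re q \<ge> 0)) \<and>
     chi id = 1"

end

theory Submission imports Defs begin

definition G :: "real \<Rightarrow> real \<Rightarrow> nat \<Rightarrow> real \<Rightarrow> real" where
 "G c a m x = (\<Sum>U\<in>Pow {..<m}. (-1)^card U * (1 - c*(x + real(card U))) powr a)"

lemma G_Suc: "G c a (Suc m) x = G c a m x - G c a m (x+1)"
proof -
  have P: "Pow {..<Suc m} = Pow {..<m} \<union> insert m ` Pow {..<m}"
    by (simp add: lessThan_Suc Pow_insert)
  have inj: "inj_on (insert m) (Pow {..<m})"
    by (rule inj_onI) (metis Diff_insert_absorb PowD lessThan_iff less_irrefl subsetD)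
  have disj: "Pow {..<m} \<inter> insert m ` Pow {..<m} = {}" by auto
  have "G c a (Suc m) x = G c a m x + (\<Sum>U\<in>insert m ` Pow {..<m}. (-1)^card U * (1 - c*(x + real(card U))) powr a)"
    unfolding G_def P by (subst sum.union_disjoint) (use disj in auto)
  also have "(\<Sum>U\<in>insert m ` Pow {..<m}. (-1)^card U * (1 - c*(x + real(card U))) powr a)
     = (\<Sum>U\<in>Pow {..<m}. (-1)^card (insert m U) * (1 - c*(x + real(card (insert m U)))) powr a)"
    by (subst sum.reindex[OF inj]) simp
  also have "\<dots> = - G c a m (x+1)"
    unfolding G_def sum_negf[symmetric]
  proof (rule sum.cong[OF refl])
    fix U assume "U \<in> Pow {..<m}"
    then have "finite U" "m \<notin> U" by (auto intro: finite_subset)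
    then show "(-1)^card (insert m U) * (1 - c*(x + real(card (insert m U)))) powr a
       = - ((-1)^card U * (1 - c*(x + 1 + real(card U))) powr a)"
      by (simp add: algebra_simps)
  qed
  finally show ?thesis by simp
qed

lemma G_deriv:
  assumes "c \<ge> 0" "1 - c*(x + real m) > 0"
  shows "(G c a m has_real_derivative (- c * a * G c (a-1) m x)) (at x)"
proof -
  have pos: "1 - c*(x + real(card U)) > 0" if "U \<in> Pow {..<m}" for U
  proof -
    have "card U \<le> m" using that by (metis PowD card_lessThan card_mono finite_lessThan)
    hence "c * real (card U) \<le> c * real m" using assms(1) by (simp add: mult_left_mono)
    thus ?thesis using assms(2) by (simp add: algebra_simps)
  qed
  have "(G c a m has_real_derivative
     (\<Sum>U\<in>Pow {..<m}. (-1)^card U * (a * (1 - c*(x + real(card U))) powr (a - of_nat 1) * (- c)))) (at x)"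
    unfolding G_def
    apply (rule DERIV_sum)
    apply (rule DERIV_cmult)
    apply (rule DERIV_fun_powr)
     apply (auto intro!: derivative_eq_intros)
    using pos by (simp add: algebra_simps)
  moreover have "(\<Sum>U\<in>Pow {..<m}. (-1)^card U * (a * (1 - c*(x + real(card U))) powr (a - of_nat 1) * (- c)))
     = - c * a * G c (a-1) m x"
    unfolding G_def sum_distrib_left by (rule sum.cong) (auto simp: algebra_simps)
  ultimately show ?thesis by simp
qed

definition P :: "real \<Rightarrow> nat \<Rightarrow> real" where
  "P a m = (\<Prod>i<m. a - real i)"

lemma P_Suc: "P a (Suc m) = a * P (a-1) m"
  unfolding P_def by (subst prod.lessThan_Suc_shift) (simp add: algebra_simps)

lemma G_sign:
  assumes "c > 0"
  shows "a \<notin> \<int> \<Longrightarrow> 1 - c*(x + real m) > 0 \<Longrightarrow> G c a m x * P a m > 0"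
proof (induction m arbitrary: a x)
  case 0
  then show ?case by (simp add: G_def P_def)
next
  case (Suc m)
  have a0: "a \<noteq> 0" using Suc.prems(1) by auto
  have a1: "a - 1 \<notin> \<int>" using Suc.prems(1)
    by (metis Ints_1 Ints_add diff_add_cancel)
  have der: "\<And>z. x \<le> z \<Longrightarrow> z \<le> x + 1 \<Longrightarrow> (G c a m has_real_derivative (- c * a * G c (a-1) m z)) (at z)"
  proof -
    fix z assume "x \<le> z" "z \<le> x + 1"
    hence "c * (z + real m) \<le> c * (x + real (Suc m))" using assms by (intro mult_left_mono) auto
    hence "1 - c*(z + real m) > 0" using Suc.prems(2) by linarith
    thus "(G c a m has_real_derivative (- c * a * G c (a-1) m z)) (at z)"
      using G_deriv assms by simp
  qed
  obtain z where z: "x < z" "z < x + 1"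
    "G c a m (x+1) - G c a m x = (x + 1 - x) * (- c * a * G c (a-1) m z)"
    using MVT2[of x "x+1" "G c a m", OF _ der] by auto
  have "c * (z + real m) \<le> c * (x + real (Suc m))" using z assms by (intro mult_left_mono) auto
  hence zpos: "1 - c*(z + real m) > 0" using Suc.prems(2) by linarith
  have IH: "G c (a-1) m z * P (a-1) m > 0" using Suc.IH[OF a1 zpos] .
  have "G c a (Suc m) x * P a (Suc m) = c * (a * a) * (G c (a-1) m z * P (a-1) m)"
    unfolding G_Suc P_Suc
  proof -
    have "G c a m x - G c a m (x + 1) = c * a * G c (a-1) m z" using z(3) by simp
    thus "(G c a m x - G c a m (x + 1)) * (a * P (a - 1) m) = c * (a * a) * (G c (a - 1) m z * P (a - 1) m)"
      by (simp add: algebra_simps)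
  qed
  also have "\<dots> > 0"
  proof -
    have "a * a > 0" using a0 by (simp add: zero_less_mult_iff) (meson linorder_neqE_linordered_idom)
    thus ?thesis using IH assms by (metis mult_pos_pos)
  qed
  finally show ?case .
qed


definition pt :: "nat \<Rightarrow> cantor" where "pt j = (\<lambda>i. i = j)"
definition flip :: "nat \<Rightarrow> nat" where "flip i = (if even i then Suc i else i - 1)"
definition Q :: "nat \<Rightarrow> cantor \<Rightarrow> bool" where "Q k x \<longleftrightarrow> x = pt (2*k) \<or> x = pt (2*k+1)"
definition PT :: "nat set \<Rightarrow> cantor \<Rightarrow> bool" where "PT T x \<longleftrightarrow> (\<exists>k\<in>T. Q k x)"
definition sT :: "nat set \<Rightarrow> cantor \<Rightarrow> cantor" where
  "sT T x = (if PT T x then x \<circ> flip else x)"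

lemma flip_flip[simp]: "flip (flip i) = i"
  unfolding flip_def by auto

lemma flip_eq: "flip i = j \<longleftrightarrow> i = flip j"
  by (metis flip_flip)

lemma pt_inj[simp]: "pt a = pt b \<longleftrightarrow> a = b"
  unfolding pt_def by (metis)

lemma pt_flip: "pt j \<circ> flip = pt (flip j)"
  unfolding pt_def by (auto simp: flip_eq)

lemma comp_flip_flip[simp]: "x \<circ> flip \<circ> flip = x"
  by (auto simp: fun_eq_iff)

lemma Q_flip: "Q k (x \<circ> flip) \<longleftrightarrow> Q k x"
proof -
  have "x \<circ> flip = pt j \<longleftrightarrow> x = pt (flip j)" for j
    by (metis comp_flip_flip pt_flip)
  moreover have "flip (2*k) = 2*k+1" "flip (2*k+1) = 2*k" by (auto simp: flip_def)
  ultimately show ?thesis unfolding Q_def by auto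
qed

lemma PT_flip: "PT T (x \<circ> flip) \<longleftrightarrow> PT T x"
  unfolding PT_def using Q_flip by auto

lemma Q_unique: "Q k x \<Longrightarrow> Q k' x \<Longrightarrow> k = k'"
  unfolding Q_def by auto

lemma PT_symdiff: "PT ((T - T') \<union> (T' - T)) x \<longleftrightarrow> PT T x \<noteq> PT T' x"
  unfolding PT_def using Q_unique by blast

lemma sT_comp: "sT T (sT T' x) = sT ((T - T') \<union> (T' - T)) x"
  unfolding sT_def PT_symdiff by (auto simp: PT_flip)

lemma sT_empty: "sT {} x = x"
  unfolding sT_def PT_def by auto

lemma sT_invol: "sT T (sT T x) = x"
  using sT_comp[of T T x] sT_empty by simp

lemma pt_Xn: "j < N \<Longrightarrow> pt j \<in> Xn N"
  unfolding pt_def Xn_def by auto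

lemma sT_Xn:
  assumes "T \<subseteq> {..<m}" "x \<in> Xn (2*m)"
  shows "sT T x \<in> Xn (2*m)"
proof (cases "PT T x")
  case True
  then obtain k where k: "k \<in> T" "x = pt (2*k) \<or> x = pt (2*k+1)" unfolding PT_def Q_def by auto
  have "k < m" using k assms by auto
  have "flip (2*k) = 2*k+1" "flip (2*k+1) = 2*k" by (auto simp: flip_def)
  then have "sT T x = pt (2*k+1) \<or> sT T x = pt (2*k)"
    using True k(2) by (auto simp: sT_def pt_flip)
  then show ?thesis using \<open>k < m\<close> by (auto intro!: pt_Xn)
qed (use assms in \<open>simp add: sT_def\<close>)

lemma sT_bij:
  assumes "T \<subseteq> {..<m}"
  shows "bij_betw (sT T) (Xn (2*m)) (Xn (2*m))"
  by (rule bij_betwI[where g="sT T"]) (auto intro: sT_Xn[OF assms] simp: sT_invol)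

lemma sT_fix: "sT T z = z \<longleftrightarrow> \<not> PT T z"
proof
  assume "sT T z = z"
  show "\<not> PT T z"
  proof
    assume p: "PT T z"
    then obtain j where "z = pt j" unfolding PT_def Q_def by auto
    moreover have "flip j \<noteq> j" unfolding flip_def by (cases j) auto
    ultimately show False using \<open>sT T z = z\<close> p by (simp add: sT_def pt_flip)
  qed
qed (simp add: sT_def)

lemma trunc_Xn: "trunc N y \<in> Xn N"
  unfolding trunc_def Xn_def by auto

lemma trunc_act:
  assumes "\<And>x. x \<in> Xn N \<Longrightarrow> s x \<in> Xn N"
  shows "trunc N (act N s y) = s (trunc N y)"
  using assms[OF trunc_Xn[of N y]] unfolding trunc_def act_def Xn_def by (auto simp: fun_eq_iff)

lemma act_comp:
  assumes "\<And>x. x \<in> Xn N \<Longrightarrow> s' x \<in> Xn N"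
  shows "act N s \<circ> act N s' = act N (s \<circ> s')"
  unfolding comp_def
  apply (rule ext)
  apply (subst act_def)
  apply (simp add: trunc_act[OF assms])
  apply (simp add: act_def)
  done

lemma act_id: "act N (\<lambda>x. x) = id"
  unfolding act_def trunc_def by (auto simp: fun_eq_iff)


abbreviation "Mb \<equiv> (\<lambda>_::nat. measure_pmf (pmf_of_set (UNIV :: bool set)))"

lemma prob_mu: "prob_space mu"
  unfolding mu_def by (rule prob_space_PiM) (simp add: prob_space_measure_pmf)

lemma space_mu[simp]: "space mu = UNIV"
  unfolding mu_def by (simp add: space_PiM)

lemma cyl_eq:
  assumes "p \<in> Xn N"
  shows "{y. trunc N y = p} = prod_emb UNIV Mb {..<N} (PiE {..<N} (\<lambda>i. {p i}))"
  using assms unfolding prod_emb_def trunc_def Xn_def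
  by (auto simp: space_PiM PiE_iff fun_eq_iff)

lemma cyl_sets:
  assumes "p \<in> Xn N"
  shows "{y. trunc N y = p} \<in> sets mu"
  unfolding cyl_eq[OF assms] mu_def
  by (intro sets_PiM_I) auto

lemma cyl_measure:
  assumes "p \<in> Xn N"
  shows "measure mu {y. trunc N y = p} = (1/2)^N"
proof -
  have "emeasure mu {y. trunc N y = p} = (\<Prod>i\<in>{..<N}. emeasure (Mb i) {p i})"
    unfolding cyl_eq[OF assms] mu_def
    by (rule emeasure_PiM_emb) (auto simp: prob_space_measure_pmf)
  also have "\<dots> = (\<Prod>i\<in>{..<N}. ennreal (1/2))"
    by (intro prod.cong refl) (simp add: emeasure_pmf_single)
  also have "\<dots> = ennreal ((1/2)^N)"
    by (subst ennreal_power[symmetric]) auto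
  finally show ?thesis by (simp add: measure_def)
qed

interpretation MU: prob_space mu by (rule prob_mu)

lemma moved_measure:
  assumes T: "T \<subseteq> {..<m}"
  shows "measure mu {y. PT T (trunc (2*m) y)} = real (card T) * (2 * (1/2)^(2*m))"
proof -
  let ?N = "2*m"
  define A where "A k = {y. trunc ?N y = pt (2*k)} \<union> {y. trunc ?N y = pt (2*k+1)}" for k
  have eq: "{y. PT T (trunc ?N y)} = (\<Union>k\<in>T. A k)"
    unfolding A_def PT_def Q_def by auto
  have fin: "finite T" using T finite_subset by blast
  have inX: "k \<in> T \<Longrightarrow> pt (2*k) \<in> Xn ?N \<and> pt (2*k+1) \<in> Xn ?N" for k
    using T by (auto intro!: pt_Xn)
  have sets: "k \<in> T \<Longrightarrow> A k \<in> sets mu" for k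
    unfolding A_def using inX cyl_sets by blast
  have mA: "k \<in> T \<Longrightarrow> measure mu (A k) = 2 * (1/2)^(2*m)" for k
    unfolding A_def
    by (subst MU.finite_measure_Union) (use inX cyl_sets cyl_measure in auto)
  have disj: "disjoint_family_on A T"
    unfolding disjoint_family_on_def A_def by auto
  have "measure mu (\<Union>k\<in>T. A k) = (\<Sum>k\<in>T. measure mu (A k))"
    by (rule MU.finite_measure_finite_Union[OF fin _ disj]) (use sets in auto)
  also have "\<dots> = real (card T) * (2 * (1/2)^(2*m))" using mA by simp
  finally show ?thesis using eq by simp
qed

lemma Fix_act:
  assumes T: "T \<subseteq> {..<m}"
  shows "Fix (act (2*m) (sT T)) = UNIV - {y. PT T (trunc (2*m) y)}"
proof -
  have "act (2*m) (sT T) y = y \<longleftrightarrow> sT T (trunc (2*m) y) = trunc (2*m) y" for y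
  proof
    assume "act (2*m) (sT T) y = y"
    then have "trunc (2*m) (act (2*m) (sT T) y) = trunc (2*m) y" by simp
    thus "sT T (trunc (2*m) y) = trunc (2*m) y"
      by (subst (asm) trunc_act) (use sT_Xn[OF T] in auto)
  next
    assume "sT T (trunc (2*m) y) = trunc (2*m) y"
    thus "act (2*m) (sT T) y = y"
      unfolding act_def by (auto simp: fun_eq_iff trunc_def)
  qed
  thus ?thesis unfolding Fix_def by (auto simp: sT_fix)
qed

lemma Fix_measure:
  assumes T: "T \<subseteq> {..<m}"
  shows "measure mu (Fix (act (2*m) (sT T))) = 1 - real (card T) * (2 * (1/2)^(2*m))"
proof -
  have fin: "finite T" using T finite_subset by blast
  have "{y. PT T (trunc (2*m) y)} = (\<Union>k\<in>T. {y. trunc (2*m) y = pt (2*k)} \<union> {y. trunc (2*m) y = pt (2*k+1)})"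
    unfolding PT_def Q_def by auto
  also have "\<dots> \<in> sets mu"
    using fin T by (intro sets.finite_UN sets.Un cyl_sets pt_Xn) auto
  finally have S: "{y. PT T (trunc (2*m) y)} \<in> sets mu" .
  show ?thesis unfolding Fix_act[OF T]
    using MU.prob_compl[OF S] moved_measure[OF T] by simp
qed


abbreviation sd :: "nat set \<Rightarrow> nat set \<Rightarrow> nat set" where "sd T T' \<equiv> (T - T') \<union> (T' - T)"

lemma sign_sd:
  assumes "finite T" "finite T'"
  shows "(-1::real)^card T * (-1)^card T' = (-1)^card (sd T T')"
proof -
  have a: "card T = card (T \<inter> T') + card (T - T')" using card_Int_Diff assms by blast
  have b: "card T' = card (T \<inter> T') + card (T' - T)" using card_Int_Diff[of T' T] assms
    by (simp add: Int_commute)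
  have c: "card (sd T T') = card (T - T') + card (T' - T)"
    by (rule card_Un_disjoint) (use assms in auto)
  have "(-1::real)^card T * (-1)^card T' = ((-1)^card (T \<inter> T'))^2 * (-1)^card (T - T') * (-1)^card (T' - T)"
    unfolding a b by (simp add: power_add power2_eq_square)
  also have "\<dots> = (-1)^card (T - T') * (-1)^card (T' - T)"
    by (simp add: power2_eq_square power_mult_distrib[symmetric])
  also have "\<dots> = (-1)^card (sd T T')" unfolding c by (simp add: power_add)
  finally show ?thesis .
qed

lemma sd_bij:
  assumes "T \<in> Pow {..<m}"
  shows "bij_betw (sd T) (Pow {..<m}) (Pow {..<m})"
  by (rule bij_betwI[where g="sd T"]) (use assms in auto)

definition gT :: "nat \<Rightarrow> nat set \<Rightarrow> cantor \<Rightarrow> cantor" where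
  "gT m T = act (2*m) (sT T)"

lemma gT_S2inf: "T \<subseteq> {..<m} \<Longrightarrow> gT m T \<in> S2inf"
  unfolding gT_def S2inf_def S2n_def using sT_bij by blast

lemma gT_comp: "T' \<subseteq> {..<m} \<Longrightarrow> gT m T \<circ> gT m T' = gT m (sd T T')"
  unfolding gT_def
  by (subst act_comp) (auto intro: sT_Xn simp: comp_def sT_comp)

lemma gT_inv: "T \<subseteq> {..<m} \<Longrightarrow> inv (gT m T) = gT m T"
proof -
  assume T: "T \<subseteq> {..<m}"
  have "gT m T \<circ> gT m T = id" unfolding gT_def
    by (subst act_comp) (auto intro: sT_Xn[OF T] simp: comp_def sT_invol act_id[unfolded id_def] id_def)
  thus ?thesis by (intro inv_unique_comp) auto
qed

theorem mainTheorem9: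
  fixes \<alpha> :: real
  assumes "0 < \<alpha>"
    and "is_character S2inf (\<lambda>s. complex_of_real (measure mu (Fix s) powr \<alpha>))"
  shows "\<alpha> \<in> \<nat>"
proof (rule ccontr)
  assume notN: "\<alpha> \<notin> \<nat>"
  have notZ: "\<alpha> \<notin> \<int>"
  proof
    assume "\<alpha> \<in> \<int>"
    then obtain k where "\<alpha> = of_int k" by (auto elim: Ints_cases)
    then have "\<alpha> = of_nat (nat k)" using assms(1) by simp
    then show False using notN by (simp add: Nats_def)
  qed
  define m where "m = nat \<lfloor>\<alpha>\<rfloor> + 2"
  define c :: real where "c = 2 * (1/2)^(2*m)"
  define A where "A = Pow {..<m}"
  define chi where "chi = (\<lambda>s. complex_of_real (measure mu (Fix s) powr \<alpha>))"
  have cpos: "c > 0" unfolding c_def by simp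
  have finA: "finite A" unfolding A_def by simp
  obtain h where h: "bij_betw h {0..<card A} A" using ex_bij_betw_nat_finite[OF finA] by blast
  define n where "n = card A"
  define g where "g i = gT m (h i)" for i
  define cc where "cc i = complex_of_real ((-1)^card (h i))" for i
  have hA: "i < n \<Longrightarrow> h i \<in> A" for i using h unfolding n_def bij_betw_def by auto
  have gS: "\<forall>i<n. g i \<in> S2inf" unfolding g_def using hA gT_S2inf by (auto simp: A_def)
  define q where "q = (\<Sum>i<n. \<Sum>j<n. cnj (cc i) * cc j * chi (g i \<circ> inv (g j)))"
  have "Re q \<ge> 0"
    using assms(2) gS unfolding is_character_def q_def chi_def Let_def by blast
  define f where "f T T' = (-1::real)^card T * (-1)^card T' * (1 - c*(0 + real (card (sd T T')))) powr \<alpha>" for T T'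
  have chi_gT: "chi (gT m U) = complex_of_real ((1 - c*(0 + real (card U))) powr \<alpha>)" if "U \<in> A" for U
    using Fix_measure[of U m] that unfolding chi_def gT_def A_def c_def by (simp add: mult.commute)
  have "q = (\<Sum>i<n. \<Sum>j<n. complex_of_real (f (h i) (h j)))"
    unfolding q_def
  proof (intro sum.cong refl)
    fix i j assume "i \<in> {..<n}" "j \<in> {..<n}"
    then have hi: "h i \<in> A" and hj: "h j \<in> A" using hA by auto
    have "g i \<circ> inv (g j) = gT m (sd (h i) (h j))"
      unfolding g_def using hj gT_inv gT_comp by (simp add: A_def)
    moreover have "sd (h i) (h j) \<in> A" using hi hj by (auto simp: A_def)
    ultimately show "cnj (cc i) * cc j * chi (g i \<circ> inv (g j)) = complex_of_real (f (h i) (h j))"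
      using chi_gT unfolding cc_def f_def by simp
  qed
  also have "\<dots> = complex_of_real (\<Sum>T\<in>A. \<Sum>T'\<in>A. f T T')"
  proof -
    have e: "{..<n} = {0..<card A}" unfolding n_def by auto
    show ?thesis unfolding of_real_sum e
      by (simp add: sum.reindex_bij_betw[OF h, of "\<lambda>T'. complex_of_real (f _ T')"])
        (rule sum.reindex_bij_betw[OF h])
  qed
  also have "\<dots> = complex_of_real (real n * G c \<alpha> m 0)"
  proof -
    have "(\<Sum>T'\<in>A. f T T') = G c \<alpha> m 0" if T: "T \<in> A" for T
    proof -
      have fT: "finite T" using T finite_subset unfolding A_def by auto
      have "(\<Sum>T'\<in>A. f T T') = (\<Sum>T'\<in>A. (\<lambda>U. (-1)^card U * (1 - c*(0 + real (card U))) powr \<alpha>) (sd T T'))"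
        unfolding f_def
        by (intro sum.cong refl) (subst sign_sd, use fT finite_subset in \<open>auto simp: A_def\<close>)
      also have "\<dots> = G c \<alpha> m 0"
        unfolding G_def A_def using sum.reindex_bij_betw[OF sd_bij[OF T[unfolded A_def]]] by simp
      finally show ?thesis .
    qed
    thus ?thesis unfolding n_def by simp
  qed
  finally have "Re q = real n * G c \<alpha> m 0" by simp
  with \<open>Re q \<ge> 0\<close> have "real n * G c \<alpha> m 0 \<ge> 0" by simp
  moreover have "n > 0" unfolding n_def A_def by (auto simp: card_gt_0_iff)
  ultimately have Gnn: "G c \<alpha> m 0 \<ge> 0" by (simp add: zero_le_mult_iff)
  have "1 - c * (0 + real m) > 0"
  proof -
    have "2 * m < 2^(2*m)" using less_exp[of "2*m"] by simp
    hence "real (2*m) < 2^(2*m)" by (metis of_nat_less_iff of_nat_numeral of_nat_power)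
    thus ?thesis unfolding c_def by (simp add: field_simps)
  qed
  from G_sign[OF cpos notZ this] have pos: "G c \<alpha> m 0 * P \<alpha> m > 0" .
  have Pneg: "P \<alpha> m < 0"
  proof -
    let ?k = "nat \<lfloor>\<alpha>\<rfloor>"
    have k: "real ?k = real_of_int \<lfloor>\<alpha>\<rfloor>" using assms(1) by simp
    have fl: "real ?k \<le> \<alpha>" "\<alpha> < real ?k + 1" unfolding k using real_of_int_floor_add_one_gt[of \<alpha>] of_int_floor_le[of \<alpha>] by linarith+
    have "P \<alpha> m = (\<Prod>i<Suc ?k. \<alpha> - real i) * (\<alpha> - real (Suc ?k))"
      unfolding P_def m_def by simp
    moreover have "(\<Prod>i<Suc ?k. \<alpha> - real i) > 0"
    proof (rule prod_pos)
      fix i assume "i \<in> {..<Suc ?k}"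
      hence "real i \<le> real ?k" by simp
      moreover have "\<alpha> \<noteq> real i" using notZ by (metis Ints_of_nat)
      ultimately show "\<alpha> - real i > 0" using fl by linarith
    qed
    moreover have "\<alpha> - real (Suc ?k) < 0" using fl(2) by (simp only: of_nat_Suc)
    ultimately show ?thesis by (simp add: mult_pos_neg)
  qed
  from pos Pneg Gnn show False by (simp add: zero_less_mult_iff)
qed

end
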